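(* Let $r\geq 2$. Then $Z_{+}(K_r\,\square\, K_r)=M_{+}(K_r\,\square\, K_r)=(r-1)^2+1$.
   Context: $K_r$ is the complete graph on $r$ vertices. The Cartesian product $G\,\square\, G'$ has vertex set $V(G)\times V(G')$, with $(g,g')$ adjacent to $(h,h')$ if and only if either $g=h$ and $\{g',h'\}\in E(G')$, or $g'=h'$ and $\{g,h\}\in E(G)$. The positive semidefinite zero forcing number $Z_{+}(G)$ is the minimum size of a set $S\subseteq V(G)$ such that, coloring $S$ blue and all other vertices white, repeated application of the following rule makes all vertices blue: a white vertex $v$ becomes blue if it is a neighbor of a blue vertex $u$ and no other white neighbor of $u$ is connected to $v$ by a path all of whose vertices are white. $M_{+}(G)$ is the maximum nullity over all real symmetric positive semidefinite $n\times n$ matrices $B=[b_{ij}]$ such that for $i\neq j$, $b_{ij}\neq 0$ if and only if $\{i,j\}$ is an edge of $G$ (diagonal entries unrestricted). *)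

theory Defs
  imports Main "Jordan_Normal_Form.Matrix_Kernel"
begin

text \<open>Graphs on vertex set {0..<n} are given by n and an adjacency relation E.\<close>

text \<open>K_r box K_r: vertex (a,b) with a,b < r is encoded as the number a*r+b.\<close>

definition Kr_box_Kr :: "nat \<Rightarrow> nat \<Rightarrow> nat \<Rightarrow> bool" where
  "Kr_box_Kr r x y \<longleftrightarrow> x < r * r \<and> y < r * r \<and>
     ((x div r = y div r \<and> x mod r \<noteq> y mod r) \<or>
      (x mod r = y mod r \<and> x div r \<noteq> y div r))"

definition white_conn :: "(nat \<Rightarrow> nat \<Rightarrow> bool) \<Rightarrow> nat set \<Rightarrow> nat \<Rightarrow> nat \<Rightarrow> bool" where
  "white_conn E W x y \<longleftrightarrow> x \<in> W \<and> (\<lambda>a b. a \<in> W \<and> b \<in> W \<and> E a b)\<^sup>*\<^sup>* x y"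

definition psd_force :: "nat \<Rightarrow> (nat \<Rightarrow> nat \<Rightarrow> bool) \<Rightarrow> nat set \<Rightarrow> nat \<Rightarrow> nat \<Rightarrow> bool" where
  "psd_force n E B u v \<longleftrightarrow> u \<in> B \<and> v \<in> {0..<n} - B \<and> E u v \<and>
     (\<forall>w. w \<in> {0..<n} - B \<and> E u w \<and> w \<noteq> v \<longrightarrow> \<not> white_conn E ({0..<n} - B) w v)"

inductive psd_reach :: "nat \<Rightarrow> (nat \<Rightarrow> nat \<Rightarrow> bool) \<Rightarrow> nat set \<Rightarrow> nat set \<Rightarrow> bool"
  for n E S where
  init: "psd_reach n E S S"
| step: "psd_reach n E S B \<Longrightarrow> psd_force n E B u v \<Longrightarrow> psd_reach n E S (insert v B)"

definition psd_zero_forcing_set :: "nat \<Rightarrow> (nat \<Rightarrow> nat \<Rightarrow> bool) \<Rightarrow> nat set \<Rightarrow> bool" where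
  "psd_zero_forcing_set n E S \<longleftrightarrow> S \<subseteq> {0..<n} \<and> psd_reach n E S {0..<n}"

definition Zplus :: "nat \<Rightarrow> (nat \<Rightarrow> nat \<Rightarrow> bool) \<Rightarrow> nat" where
  "Zplus n E = (LEAST k. \<exists>S. psd_zero_forcing_set n E S \<and> card S = k)"

definition psd_mat :: "real mat \<Rightarrow> bool" where
  "psd_mat A \<longleftrightarrow> A \<in> carrier_mat (dim_row A) (dim_row A) \<and> A\<^sup>T = A \<and>
     (\<forall>x \<in> carrier_vec (dim_row A). x \<bullet> (A *\<^sub>v x) \<ge> 0)"

definition graph_psd_mats :: "nat \<Rightarrow> (nat \<Rightarrow> nat \<Rightarrow> bool) \<Rightarrow> real mat set" where
  "graph_psd_mats n E = {A. A \<in> carrier_mat n n \<and> psd_mat A \<and>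
     (\<forall>i<n. \<forall>j<n. i \<noteq> j \<longrightarrow> (A $$ (i, j) \<noteq> 0 \<longleftrightarrow> E i j))}"

definition Mplus :: "nat \<Rightarrow> (nat \<Rightarrow> nat \<Rightarrow> bool) \<Rightarrow> nat" where
  "Mplus n E = (GREATEST k. \<exists>A \<in> graph_psd_mats n E. kernel_dim A = k)"

end

theory Submission
  imports Defs
begin

definition qf :: "nat \<Rightarrow> (nat \<Rightarrow> nat \<Rightarrow> real) \<Rightarrow> (nat \<Rightarrow> real) \<Rightarrow> (nat \<Rightarrow> real) \<Rightarrow> real" where
  "qf n M f g = (\<Sum>i<n. f i * (\<Sum>j<n. M i j * g j))"

lemma qf_sym:
  assumes "\<forall>i<n. \<forall>j<n. M i j = M j i"
  shows "qf n M f g = qf n M g f"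
proof -
  have "qf n M f g = (\<Sum>i<n. \<Sum>j<n. f i * M i j * g j)"
    by (simp add: qf_def sum_distrib_left mult.assoc)
  also have "\<dots> = (\<Sum>j<n. \<Sum>i<n. f i * M i j * g j)" by (rule sum.swap)
  also have "\<dots> = (\<Sum>j<n. \<Sum>i<n. g j * M j i * f i)"
    using assms by (intro sum.cong refl) (auto simp: mult.commute)
  also have "\<dots> = qf n M g f"
    by (simp add: qf_def sum_distrib_left mult.assoc)
  finally show ?thesis .
qed

lemma qf_lin:
  "qf n M (\<lambda>i. f i + t * g i) (\<lambda>i. f i + t * g i) =
   qf n M f f + t * qf n M f g + t * qf n M g f + t^2 * qf n M g g"
  by (simp add: qf_def algebra_simps sum.distrib sum_distrib_left power2_eq_square)

lemma psd_zero:
  assumes sym: "\<forall>i<n. \<forall>j<n. M i j = M j i"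
    and psd: "\<forall>f. 0 \<le> qf n M f f"
    and y0: "qf n M y y = 0"
    and i: "i < n"
  shows "(\<Sum>j<n. M i j * y j) = 0"
proof -
  define w where "w i = (\<Sum>j<n. M i j * y j)" for i
  define S where "S = (\<Sum>i<n. (w i)^2)"
  define P where "P = qf n M w w"
  have qyw: "qf n M y w = S"
    unfolding qf_sym[OF sym, of y w] S_def
    by (simp add: qf_def w_def power2_eq_square)
  have qwy: "qf n M w y = S" using qyw qf_sym[OF sym, of y w] by simp
  have P0: "0 \<le> P" using psd P_def by auto
  have S0: "0 \<le> S" unfolding S_def by (simp add: sum_nonneg)
  have key: "0 \<le> 2 * t * S + t^2 * P" for t
    using psd[rule_format, of "\<lambda>i. y i + t * w i"] unfolding qf_lin y0 qyw qwy P_def[symmetric]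
    by (simp add: algebra_simps)
  have "S = 0"
  proof (rule ccontr)
    assume "S \<noteq> 0"
    hence Sp: "S > 0" using S0 by simp
    define t where "t = - S / (P + 1)"
    have tP: "t * (P + 1) = - S" using P0 by (simp add: t_def)
    have "(P+1)^2 * (2*t*S + t^2*P) = 2*S*(P+1)*(t*(P+1)) + (t*(P+1))^2*P"
      by (simp add: algebra_simps power2_eq_square)
    also have "\<dots> = - (S^2) * (P + 2)" unfolding tP by (simp add: algebra_simps power2_eq_square)
    also have "\<dots> < 0" using Sp P0 by (simp add: mult_pos_pos)
    finally have neg: "(P+1)^2 * (2*t*S + t^2*P) < 0" .
    have "(P+1)^2 > 0" using P0 by simp
    hence "2 * t * S + t^2 * P < 0" using neg by (simp add: mult_less_0_iff)
    thus False using key[of t] by simp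
  qed
  hence "\<forall>i\<in>{..<n}. (w i)^2 = 0" unfolding S_def
    by (subst sum_nonneg_eq_0_iff[symmetric]) auto
  thus ?thesis using i w_def by simp
qed

lemma psd_reach_sub: "psd_reach n E S B \<Longrightarrow> S \<subseteq> {0..<n} \<Longrightarrow> B \<subseteq> {0..<n}"
  by (induction rule: psd_reach.induct) (auto simp: psd_force_def)

lemma propagate:
  fixes M :: "nat \<Rightarrow> nat \<Rightarrow> real"
  assumes sym: "\<forall>i<n. \<forall>j<n. M i j = M j i"
    and psd: "\<forall>f. 0 \<le> qf n M f f"
    and pat: "\<forall>i<n. \<forall>j<n. i \<noteq> j \<longrightarrow> (M i j \<noteq> 0 \<longleftrightarrow> E i j)"
    and Esym: "\<forall>i j. E i j \<longrightarrow> E j i"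
    and ker: "\<forall>i<n. (\<Sum>j<n. M i j * x j) = 0"
    and reach: "psd_reach n E S B"
    and S: "S \<subseteq> {0..<n}"
    and zS: "\<forall>i\<in>S. x i = 0"
  shows "\<forall>i\<in>B. x i = 0"
  using reach
proof (induction rule: psd_reach.induct)
  case init
  then show ?case using zS by simp
next
  case (step B u v)
  have Bn: "B \<subseteq> {0..<n}" using psd_reach_sub[OF step.hyps(1) S] .
  define W where "W = {0..<n} - B"
  define C where "C = {w. white_conn E W w v}"
  define y where "y i = (if i \<in> C then x i else 0)" for i
  define z where "z i = x i - y i" for i
  have F: "u \<in> B" "v \<in> W" "E u v"
    "\<And>w. w \<in> W \<Longrightarrow> E u w \<Longrightarrow> w \<noteq> v \<Longrightarrow> \<not> white_conn E W w v"
    using step.hyps(2) unfolding psd_force_def W_def by auto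
  have CW: "C \<subseteq> W" unfolding C_def white_conn_def by auto
  have vC: "v \<in> C" using F(2) unfolding C_def white_conn_def by auto
  have clos: "j \<in> C" if "i \<in> C" "j \<in> W" "E j i" for i j
  proof -
    have "i \<in> W" using that CW by auto
    moreover have "(\<lambda>a b. a \<in> W \<and> b \<in> W \<and> E a b)\<^sup>*\<^sup>* i v"
      using that(1) unfolding C_def white_conn_def by auto
    ultimately have "(\<lambda>a b. a \<in> W \<and> b \<in> W \<and> E a b)\<^sup>*\<^sup>* j v"
      using that(2,3) converse_rtranclp_into_rtranclp[of "\<lambda>a b. a \<in> W \<and> b \<in> W \<and> E a b" j i v] by blast
    thus ?thesis using that(2) unfolding C_def white_conn_def by auto
  qed
  have qxx: "qf n M x x = 0" using ker by (simp add: qf_def)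
  have qyz: "qf n M y z = 0"
    unfolding qf_def
  proof (rule sum.neutral, rule ballI)
    fix i assume i: "i \<in> {..<n}"
    show "y i * (\<Sum>j<n. M i j * z j) = 0"
    proof (cases "i \<in> C")
      case False thus ?thesis by (simp add: y_def)
    next
      case iC: True
      have "(\<Sum>j<n. M i j * z j) = 0"
      proof (rule sum.neutral, rule ballI)
        fix j assume j: "j \<in> {..<n}"
        show "M i j * z j = 0"
        proof (cases "j \<in> C")
          case True thus ?thesis by (simp add: z_def y_def)
        next
          case jC: False
          show ?thesis
          proof (cases "j \<in> B")
            case True thus ?thesis using step.IH by (simp add: z_def y_def)
          next
            case False
            hence jW: "j \<in> W" using j by (simp add: W_def)
            have "i \<noteq> j" using iC jC by auto
            have "M i j = 0"
            proof (rule ccontr)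
              assume "M i j \<noteq> 0"
              hence "E i j" using pat i j \<open>i \<noteq> j\<close> by auto
              hence "E j i" using Esym by auto
              thus False using clos[OF iC jW] jC by simp
            qed
            thus ?thesis by simp
          qed
        qed
      qed
      thus ?thesis by simp
    qed
  qed
  have qzy: "qf n M z y = 0" using qyz qf_sym[OF sym] by metis
  have "qf n M x x = qf n M y y + qf n M y z + qf n M z y + qf n M z z"
    using qf_lin[of n M y 1 z] by (simp add: z_def)
  hence "qf n M y y + qf n M z z = 0" using qxx qyz qzy by simp
  moreover have "0 \<le> qf n M y y" "0 \<le> qf n M z z" using psd by auto
  ultimately have qyy: "qf n M y y = 0" by simp
  have un: "u < n" using F(1) Bn by auto
  have vn: "v < n" using F(2) by (simp add: W_def)
  have "(\<Sum>j<n. M u j * y j) = 0" using psd_zero[OF sym psd qyy un] .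
  moreover have "(\<Sum>j<n. M u j * y j) = (\<Sum>j<n. if j = v then M u v * x v else 0)"
  proof (rule sum.cong[OF refl])
    fix j assume j: "j \<in> {..<n}"
    show "M u j * y j = (if j = v then M u v * x v else 0)"
    proof (cases "j = v")
      case True thus ?thesis using vC by (simp add: y_def)
    next
      case jv: False
      show ?thesis
      proof (cases "j \<in> C")
        case False thus ?thesis using jv by (simp add: y_def)
      next
        case True
        hence jW: "j \<in> W" using CW by auto
        have "j \<noteq> u" using jW F(1) by (auto simp: W_def)
        have "M u j = 0"
        proof (rule ccontr)
          assume "M u j \<noteq> 0"
          hence "E u j" using pat un j \<open>j \<noteq> u\<close> by auto
          thus False using F(4)[OF jW _ jv] True unfolding C_def by auto
        qed
        thus ?thesis using jv by simp
      qed
    qed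
  qed
  moreover have "(\<Sum>j<n. if j = v then M u v * x v else 0) = M u v * x v"
    using vn by simp
  moreover have "M u v \<noteq> 0"
  proof -
    have "u \<noteq> v" using F(1,2) by (auto simp: W_def)
    thus ?thesis using pat un vn F(3) by auto
  qed
  ultimately have "x v = 0" by simp
  thus ?case using step.IH by auto
qed

lemma kernel_dim_le:
  fixes A :: "real mat"
  assumes A: "A \<in> carrier_mat n n" and S: "S \<subseteq> {0..<n}"
    and van: "\<And>x. x \<in> mat_kernel A \<Longrightarrow> (\<forall>i\<in>S. x $ i = 0) \<Longrightarrow> x = 0\<^sub>v n"
  shows "kernel_dim A \<le> card S"
proof -
  interpret K: kernel n n A by (unfold_locales) (rule A)
  obtain \<beta> where fin: "finite \<beta>" and bas: "K.basis \<beta>" using kernel_basis_exists[OF A] by blast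
  have dimb: "kernel_dim A = card \<beta>" using K.Ker.dim_basis[OF fin bas] by simp
  have bK: "\<beta> \<subseteq> mat_kernel A" and li: "K.lin_indpt \<beta>" using bas unfolding K.Ker.basis_def by auto
  define m where "m = card S"
  define ix where "ix = (\<lambda>k. sorted_list_of_set S ! k)"
  have finS: "finite S" using S finite_subset by blast
  have ixS: "\<exists>k<m. ix k = i" if "i \<in> S" for i
  proof -
    have "i \<in> set (sorted_list_of_set S)" using that finS by simp
    then obtain k where "k < length (sorted_list_of_set S)" "sorted_list_of_set S ! k = i"
      by (metis in_set_conv_nth)
    thus ?thesis unfolding ix_def m_def by auto
  qed
  define \<phi> where "\<phi> v = vec m (\<lambda>k. v $ ix k)" for v :: "real vec"
  interpret V: vec_space "TYPE(real)" m .
  have phicar: "\<phi> ` \<beta> \<subseteq> carrier_vec m" by (auto simp: \<phi>_def)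
  have bcar: "b \<in> carrier_vec n" if "b \<in> \<beta>" for b using mat_kernelD(1)[OF A] bK that by auto
  have inj: "inj_on \<phi> \<beta>"
  proof (rule inj_onI)
    fix b1 b2 assume b1: "b1 \<in> \<beta>" and b2: "b2 \<in> \<beta>" and eq: "\<phi> b1 = \<phi> b2"
    have c1: "b1 \<in> carrier_vec n" and c2: "b2 \<in> carrier_vec n" using b1 b2 bcar by auto
    have "A *\<^sub>v (b1 - b2) = A *\<^sub>v b1 - A *\<^sub>v b2" using mult_minus_distrib_mat_vec[OF A c1 c2] .
    also have "\<dots> = 0\<^sub>v n"
    proof -
      have "A *\<^sub>v b1 = 0\<^sub>v n" "A *\<^sub>v b2 = 0\<^sub>v n" using mat_kernelD(2)[OF A] bK b1 b2 by auto
      thus ?thesis by simp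
    qed
    finally have "b1 - b2 \<in> mat_kernel A" using c1 c2 by (intro mat_kernelI[OF A]) auto
    moreover have "\<forall>i\<in>S. (b1 - b2) $ i = 0"
    proof
      fix i assume iS: "i \<in> S"
      then obtain k where k: "k < m" "ix k = i" using ixS by blast
      have "\<phi> b1 $ k = \<phi> b2 $ k" using eq by simp
      hence "b1 $ i = b2 $ i" using k by (simp add: \<phi>_def)
      moreover have "i < n" using iS S by auto
      ultimately show "(b1 - b2) $ i = 0" using c2 by simp
    qed
    ultimately have "b1 - b2 = 0\<^sub>v n" using van by blast
    show "b1 = b2"
    proof (rule eq_vecI)
      show "dim_vec b1 = dim_vec b2" using c1 c2 by simp
      fix i assume "i < dim_vec b2"
      hence i: "i < n" using c2 by simp
      have "(b1 - b2) $ i = 0" using \<open>b1 - b2 = 0\<^sub>v n\<close> i by simp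
      thus "b1 $ i = b2 $ i" using i c2 by simp
    qed
  qed
  have liV: "V.lin_indpt (\<phi> ` \<beta>)"
  proof (rule V.finite_lin_indpt2)
    show "finite (\<phi> ` \<beta>)" using fin by simp
    show "\<phi> ` \<beta> \<subseteq> carrier_vec m" using phicar by simp
    fix a assume a: "True" and lc: "V.lincomb a (\<phi> ` \<beta>) = 0\<^sub>v m"
    define c where "c b = a (\<phi> b)" for b
    define w where "w = K.lincomb c \<beta>"
    have wK: "w \<in> mat_kernel A" unfolding w_def using bK by (intro K.Ker.lincomb_closed) auto
    have "\<forall>i\<in>S. w $ i = 0"
    proof
      fix i assume iS: "i \<in> S"
      then obtain k where k: "k < m" "ix k = i" using ixS by blast
      have i: "i < n" using iS S by auto
      have "w $ i = (\<Sum>b\<in>\<beta>. c b * b $ i)" unfolding w_def using K.lincomb_index[OF i bK] .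
      also have "\<dots> = (\<Sum>b\<in>\<beta>. a (\<phi> b) * \<phi> b $ k)" using k by (simp add: c_def \<phi>_def)
      also have "\<dots> = (\<Sum>y\<in>\<phi> ` \<beta>. a y * y $ k)" using sum.reindex[OF inj, of "\<lambda>y. a y * y $ k"] by simp
      also have "\<dots> = V.lincomb a (\<phi> ` \<beta>) $ k" using V.lincomb_index[OF k(1) phicar] by simp
      also have "\<dots> = 0" using lc k by simp
      finally show "w $ i = 0" .
    qed
    hence w0: "w = 0\<^sub>v n" using van wK by blast
    have "c \<in> \<beta> \<rightarrow> {\<zero>\<^bsub>class_ring\<^esub>}"
      using K.Ker.not_lindepD[OF li fin subset_refl] w0 unfolding w_def by auto
    thus "\<forall>v\<in>\<phi> ` \<beta>. a v = 0" unfolding c_def by auto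
  qed
  have "card (\<phi> ` \<beta>) \<le> V.dim" using V.li_le_dim(2)[OF V.fin_dim _ liV] phicar by simp
  hence "card \<beta> \<le> m" using card_image[OF inj] V.dim_is_n by simp
  thus ?thesis using dimb m_def by simp
qed

lemma mat_vec_entry:
  fixes A :: "real mat"
  assumes "A \<in> carrier_mat n n" "x \<in> carrier_vec n" "i < n"
  shows "(A *\<^sub>v x) $ i = (\<Sum>j<n. A $$ (i, j) * x $ j)"
  using assms by (auto simp: scalar_prod_def atLeast0LessThan intro!: sum.cong)

lemma quad_form:
  fixes A :: "real mat"
  assumes "A \<in> carrier_mat n n"
  shows "vec n f \<bullet> (A *\<^sub>v vec n f) = qf n (\<lambda>i j. A $$ (i, j)) f f"
  using assms by (auto simp: scalar_prod_def atLeast0LessThan qf_def mat_vec_entry intro!: sum.cong)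

lemma mplus_le_zplus:
  assumes AG: "A \<in> graph_psd_mats n E" and Z: "psd_zero_forcing_set n E S"
    and Esym: "\<forall>i j. E i j \<longrightarrow> E j i"
  shows "kernel_dim A \<le> card S"
proof -
  have A: "A \<in> carrier_mat n n" and P: "psd_mat A"
    and pat: "\<forall>i<n. \<forall>j<n. i \<noteq> j \<longrightarrow> (A $$ (i, j) \<noteq> 0 \<longleftrightarrow> E i j)"
    using AG unfolding graph_psd_mats_def by auto
  have S: "S \<subseteq> {0..<n}" and R: "psd_reach n E S {0..<n}" using Z unfolding psd_zero_forcing_set_def by auto
  define M where "M i j = A $$ (i, j)" for i j
  have sym: "\<forall>i<n. \<forall>j<n. M i j = M j i"
  proof (intro allI impI)
    fix i j assume "i < n" "j < n"
    have "A\<^sup>T $$ (i, j) = A $$ (j, i)" using A \<open>i < n\<close> \<open>j < n\<close> by auto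
    thus "M i j = M j i" using P unfolding psd_mat_def M_def by auto
  qed
  have psd: "\<forall>f. 0 \<le> qf n M f f"
  proof
    fix f :: "nat \<Rightarrow> real"
    have "vec n f \<in> carrier_vec (dim_row A)" using A by auto
    hence "0 \<le> vec n f \<bullet> (A *\<^sub>v vec n f)" using P unfolding psd_mat_def by blast
    thus "0 \<le> qf n M f f" using quad_form[OF A] unfolding M_def by simp
  qed
  have pat': "\<forall>i<n. \<forall>j<n. i \<noteq> j \<longrightarrow> (M i j \<noteq> 0 \<longleftrightarrow> E i j)" using pat M_def by simp
  show ?thesis
  proof (rule kernel_dim_le[OF A S])
    fix x assume xK: "x \<in> mat_kernel A" and xS: "\<forall>i\<in>S. x $ i = 0"
    have xc: "x \<in> carrier_vec n" and Ax: "A *\<^sub>v x = 0\<^sub>v n" using mat_kernelD[OF A xK] by auto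
    have ker: "\<forall>i<n. (\<Sum>j<n. M i j * x $ j) = 0"
    proof (intro allI impI)
      fix i assume i: "i < n"
      have "(A *\<^sub>v x) $ i = 0" using Ax i by simp
      thus "(\<Sum>j<n. M i j * x $ j) = 0" using mat_vec_entry[OF A xc i] M_def by simp
    qed
    have "\<forall>i\<in>{0..<n}. x $ i = 0"
      using propagate[OF sym psd pat' Esym ker R S] xS by blast
    thus "x = 0\<^sub>v n" using xc by (intro eq_vecI) auto
  qed
qed

lemma std_force:
  assumes "psd_reach n E S B" "u \<in> B" "v < n" "v \<notin> B" "E u v"
    "\<forall>w<n. w \<notin> B \<longrightarrow> E u w \<longrightarrow> w = v"
  shows "psd_reach n E S (insert v B)"
proof (rule psd_reach.step[OF assms(1)])
  have "\<forall>w. w \<in> {0..<n} - B \<and> E u w \<and> w \<noteq> v \<longrightarrow> \<not> white_conn E ({0..<n} - B) w v"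
    using assms(6) by auto
  thus "psd_force n E B u v" unfolding psd_force_def using assms(2-5) by simp
qed

lemma dm_eq: "(x::nat) div r = y div r \<Longrightarrow> x mod r = y mod r \<Longrightarrow> x = y"
  by (metis div_mult_mod_eq)

lemma dm_simps:
  assumes "b < (r::nat)"
  shows "(a * r + b) div r = a" "(a * r + b) mod r = b"
  using assms by auto

lemma Kr_sym: "Kr_box_Kr r x y \<Longrightarrow> Kr_box_Kr r y x"
  unfolding Kr_box_Kr_def by metis

definition S0 :: "nat \<Rightarrow> nat set" where
  "S0 r = {x. x < r * r \<and> ((x div r \<ge> 1 \<and> x mod r \<ge> 1) \<or> x = 0)}"

lemma S0_alt: assumes r2: "r \<ge> 2" shows "S0 r = insert 0 ((\<lambda>(a, b). a * r + b) ` ({1..<r} \<times> {1..<r}))"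
proof (rule Set.set_eqI)
  fix x
  have r0: "r > 0" using r2 by simp
  show "x \<in> S0 r \<longleftrightarrow> x \<in> insert 0 ((\<lambda>(a, b). a * r + b) ` ({1..<r} \<times> {1..<r}))"
  proof
    assume "x \<in> S0 r"
    hence x: "x < r * r" "(x div r \<ge> 1 \<and> x mod r \<ge> 1) \<or> x = 0" unfolding S0_def by auto
    show "x \<in> insert 0 ((\<lambda>(a, b). a * r + b) ` ({1..<r} \<times> {1..<r}))"
    proof (cases "x = 0")
      case False
      hence "x div r \<ge> 1" "x mod r \<ge> 1" using x by auto
      moreover have "x div r < r" using x(1) by (simp add: less_mult_imp_div_less)
      moreover have "x mod r < r" using r0 by simp
      moreover have "x = (x div r) * r + x mod r" by simp
      ultimately have "(x div r, x mod r) \<in> {1..<r} \<times> {1..<r}" "x = (\<lambda>(a, b). a * r + b) (x div r, x mod r)"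
        by auto
      thus ?thesis by blast
    qed simp
  next
    assume "x \<in> insert 0 ((\<lambda>(a, b). a * r + b) ` ({1..<r} \<times> {1..<r}))"
    then show "x \<in> S0 r"
    proof
      assume "x = 0" thus ?thesis using r0 unfolding S0_def by simp
    next
      assume "x \<in> (\<lambda>(a, b). a * r + b) ` ({1..<r} \<times> {1..<r})"
      then obtain a b where ab: "a \<in> {1..<r}" "b \<in> {1..<r}" "x = a * r + b" by auto
      have "a * r + b < r * r"
      proof -
        have "a * r + b < a * r + r" using ab by simp
        also have "\<dots> = (a + 1) * r" by simp
        also have "\<dots> \<le> r * r" using ab by (intro mult_right_mono) auto
        finally show ?thesis .
      qed
      moreover have "(a * r + b) div r = a" "(a * r + b) mod r = b" using dm_simps[of b r a] ab by auto
      ultimately show ?thesis unfolding S0_def using ab by simp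
    qed
  qed
qed

lemma card_S0: assumes r2: "r \<ge> 2" shows "card (S0 r) = (r - 1)^2 + 1"
proof -
  have inj: "inj_on (\<lambda>(a, b). a * r + b) ({1..<r} \<times> {1..<r})"
  proof (rule inj_onI, clarsimp)
    fix a b a' b' assume "a < r" "b < r" "a' < r" "b' < r" "a * r + b = a' * r + b'"
    thus "a = a' \<and> b = b'" by (metis dm_simps)
  qed
  have "0 \<notin> (\<lambda>(a, b). a * r + b) ` ({1..<r} \<times> {1..<r})" by auto
  hence "card (S0 r) = Suc (card ((\<lambda>(a, b). a * r + b) ` ({1..<r} \<times> {1..<r})))"
    unfolding S0_alt[OF r2] by (simp add: card_insert_if)
  also have "\<dots> = Suc ((r - 1) * (r - 1))" using card_image[OF inj] by (simp add: card_cartesian_product)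
  finally show ?thesis by (simp add: power2_eq_square)
qed

lemma mem_S0: "x \<in> S0 r \<longleftrightarrow> x < r * r \<and> ((x div r \<ge> 1 \<and> x mod r \<ge> 1) \<or> x = 0)"
  unfolding S0_def by simp

lemma Kr_E: "Kr_box_Kr r x y \<longleftrightarrow> x < r * r \<and> y < r * r \<and>
     ((x div r = y div r \<and> x mod r \<noteq> y mod r) \<or> (x mod r = y mod r \<and> x div r \<noteq> y div r))"
  unfolding Kr_box_Kr_def by simp

lemma Kr_Ed: "Kr_box_Kr r x y \<Longrightarrow> (x div r = y div r \<and> x mod r \<noteq> y mod r) \<or> (x mod r = y mod r \<and> x div r \<noteq> y div r)"
  unfolding Kr_box_Kr_def by blast

lemma lt_rr: assumes "a < r" "b < (r::nat)" shows "a * r + b < r * r"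
proof -
  have "a * r + b < a * r + r" using assms by simp
  also have "\<dots> = (a + 1) * r" by simp
  also have "\<dots> \<le> r * r" using assms by (intro mult_right_mono) auto
  finally show ?thesis .
qed

lemma phase1:
  assumes r2: "r \<ge> 2"
  shows "psd_reach (r * r) (Kr_box_Kr r) (S0 r) (insert r (S0 r))"
proof -
  let ?n = "r * r" and ?E = "Kr_box_Kr r"
  define W where "W = {0..<?n} - S0 r"
  have r0: "r > 0" using r2 by simp
  have u: "(r + 1) div r = 1" "(r + 1) mod r = 1" using dm_simps[of 1 r 1] r2 by auto
  have v: "r div r = 1" "r mod r = 0" using r2 by auto
  have un: "r + 1 < ?n" using lt_rr[of 1 r 1] r2 by simp
  have vn: "r < ?n" using lt_rr[of 1 r 0] r2 by simp
  have row0: "(\<lambda>a b. a \<in> W \<and> b \<in> W \<and> ?E a b)\<^sup>*\<^sup>* w y \<Longrightarrow> w < r \<Longrightarrow> y < r" for w y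
  proof (induction rule: rtranclp_induct)
    case base thus ?case by simp
  next
    case (step y z)
    have yW: "y \<in> W" "z \<in> W" "?E y z" using step.hyps(2) by auto
    have "y \<noteq> 0" using yW(1) by (auto simp: W_def mem_S0)
    hence ym: "y div r = 0" "y mod r = y" "y \<ge> 1" using step.IH step.prems by auto
    have zn: "z < ?n" "z \<notin> S0 r" using yW(2) unfolding W_def by auto
    show ?case
    proof (cases "z div r = 0")
      case True thus ?thesis using r0 by (simp add: div_eq_0_iff)
    next
      case False
      hence "z mod r = y mod r" using Kr_Ed[OF yW(3)] ym by metis
      hence "z \<in> S0 r" using False ym zn(1) by (auto simp: mem_S0)
      thus ?thesis using zn by simp
    qed
  qed
  have force: "psd_force ?n ?E (S0 r) (r + 1) r"
      unfolding psd_force_def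
    proof (intro conjI allI impI)
      show "r + 1 \<in> S0 r" using u un by (simp add: mem_S0)
      show "r \<in> {0..<?n} - S0 r" using v vn by (simp add: mem_S0)
      show "?E (r + 1) r" using u v un vn by (simp add: Kr_E)
      fix w assume w: "w \<in> {0..<?n} - S0 r \<and> ?E (r + 1) w \<and> w \<noteq> r"
      have wlt: "w < r"
      proof -
        have wn: "w < ?n" "w \<notin> S0 r" "w \<noteq> r" using w by auto
        have E: "(w div r = 1 \<and> w mod r \<noteq> 1) \<or> (w mod r = 1 \<and> w div r \<noteq> 1)"
          using Kr_Ed[of r "r + 1" w] w u by metis
        show ?thesis
        proof (cases "w div r = 1")
          case True
          hence "w mod r \<noteq> 1" using E by auto
          have "w mod r = 0" using True wn by (auto simp: mem_S0)
          hence "w = r" using True v by (intro dm_eq[of w r r]) auto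
          thus ?thesis using wn by simp
        next
          case False
          hence "w mod r = 1" using E by auto
          hence "w div r = 0" using wn by (auto simp: mem_S0)
          thus ?thesis using r0 by (simp add: div_eq_0_iff)
        qed
      qed
      show "\<not> white_conn ?E ({0..<?n} - S0 r) w r"
      proof
        assume "white_conn ?E ({0..<?n} - S0 r) w r"
        hence "(\<lambda>a b. a \<in> W \<and> b \<in> W \<and> ?E a b)\<^sup>*\<^sup>* w r" unfolding white_conn_def W_def by auto
        from row0[OF this wlt] show False by simp
      qed
    qed
  show ?thesis using psd_reach.step[OF psd_reach.init force] .
qed

lemma phase2:
  assumes r2: "r \<ge> 2"
  shows "1 \<le> k \<Longrightarrow> k \<le> r \<Longrightarrow> psd_reach (r * r) (Kr_box_Kr r) (S0 r) (insert r (S0 r) \<union> {1..<k})"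
proof (induction k)
  case 0 thus ?case by simp
next
  case (Suc k)
  show ?case
  proof (cases "k = 0")
    case True thus ?thesis using phase1[OF r2] by simp
  next
    case False
    hence k: "1 \<le> k" "k < r" using Suc.prems by auto
    let ?B = "insert r (S0 r) \<union> {1..<k}"
    have IH: "psd_reach (r * r) (Kr_box_Kr r) (S0 r) ?B" using Suc.IH k by auto
    have r0: "r > 0" using r2 by simp
    have u: "(r + k) div r = 1" "(r + k) mod r = k" using dm_simps[of k r 1] k by auto
    have v: "k div r = 0" "k mod r = k" using dm_simps[of k r 0] k by auto
    have un: "r + k < r * r" using lt_rr[of 1 r k] r2 k by simp
    have vn: "k < r * r" using lt_rr[of 0 r k] r2 k by simp
    have rdm: "r div r = 1" "r mod r = 0" using r0 by auto
    have "psd_reach (r * r) (Kr_box_Kr r) (S0 r) (insert k ?B)"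
    proof (rule std_force[OF IH, of "r + k"])
      show "r + k \<in> ?B" using u un k by (simp add: mem_S0)
      show "k < r * r" using vn by simp
      show "k \<notin> ?B" using v k by (auto simp: mem_S0)
      show "Kr_box_Kr r (r + k) k" using u v un vn by (simp add: Kr_E)
      show "\<forall>w<r * r. w \<notin> ?B \<longrightarrow> Kr_box_Kr r (r + k) w \<longrightarrow> w = k"
      proof (intro allI impI)
        fix w assume wn: "w < r * r" and wB: "w \<notin> ?B" and E: "Kr_box_Kr r (r + k) w"
        have E': "(w div r = 1 \<and> w mod r \<noteq> k) \<or> (w mod r = k \<and> w div r \<noteq> 1)"
          using Kr_Ed[OF E] u by metis
        show "w = k"
        proof (cases "w div r = 1")
          case True
          have "w mod r = 0" using True wn wB by (auto simp: mem_S0)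
          hence "w = r" using True rdm by (intro dm_eq[of w r r]) auto
          thus ?thesis using wB by simp
        next
          case False
          hence "w mod r = k" using E' by auto
          hence "w div r = 0" using wn wB k by (auto simp: mem_S0)
          thus ?thesis using v \<open>w mod r = k\<close> by (intro dm_eq[of w r k]) auto
        qed
      qed
    qed
    moreover have "insert k ?B = insert r (S0 r) \<union> {1..<Suc k}" using k by auto
    ultimately show ?thesis by simp
  qed
qed

lemma phase3:
  assumes r2: "r \<ge> 2"
  shows "2 \<le> a \<Longrightarrow> a \<le> r \<Longrightarrow> psd_reach (r * r) (Kr_box_Kr r) (S0 r)
     (insert r (S0 r) \<union> {1..<r} \<union> {x. \<exists>i. 2 \<le> i \<and> i < a \<and> x = i * r})"
proof (induction a)
  case 0 thus ?case by simp
next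
  case (Suc a)
  show ?case
  proof (cases "a = 1")
    case True
    have "{x. \<exists>i. 2 \<le> i \<and> i < Suc a \<and> x = i * r} = {}" using True by auto
    moreover have "psd_reach (r * r) (Kr_box_Kr r) (S0 r) (insert r (S0 r) \<union> {1..<r})"
      using phase2[OF r2, of r] r2 by simp
    ultimately show ?thesis by (simp only: Un_empty_right)
  next
    case False
    hence a: "2 \<le> a" "a < r" using Suc.prems by auto
    let ?B = "insert r (S0 r) \<union> {1..<r} \<union> {x. \<exists>i. 2 \<le> i \<and> i < a \<and> x = i * r}"
    have IH: "psd_reach (r * r) (Kr_box_Kr r) (S0 r) ?B" using Suc.IH a by auto
    have r0: "r > 0" using r2 by simp
    have u: "(a * r + 1) div r = a" "(a * r + 1) mod r = 1" using dm_simps[of 1 r a] r2 by auto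
    have v: "(a * r) div r = a" "(a * r) mod r = 0" using dm_simps[of 0 r a] r2 by auto
    have un: "a * r + 1 < r * r" using lt_rr[of a r 1] r2 a by simp
    have vn: "a * r < r * r" using lt_rr[of a r 0] r2 a by simp
    have one: "1 div r = 0" "1 mod r = 1" using dm_simps[of 1 r 0] r2 by auto
    have ar: "a * r \<ge> 2 * r" using a by simp
    have vB: "a * r \<notin> ?B"
    proof
      assume "a * r \<in> ?B"
      moreover have "a * r \<notin> S0 r" using v a by (auto simp: mem_S0)
      moreover have "a * r \<noteq> r" using ar r0 by auto
      moreover have "a * r \<notin> {1..<r}" using ar by auto
      moreover have "a * r \<noteq> i * r" if "i < a" for i using that r0 by simp
      ultimately show False by blast
    qed
    have "psd_reach (r * r) (Kr_box_Kr r) (S0 r) (insert (a * r) ?B)"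
    proof (rule std_force[OF IH, of "a * r + 1"])
      show "a * r + 1 \<in> ?B" using u un a by (simp add: mem_S0)
      show "a * r < r * r" using vn by simp
      show "a * r \<notin> ?B" by (rule vB)
      show "Kr_box_Kr r (a * r + 1) (a * r)" using u v un vn by (simp add: Kr_E)
      show "\<forall>w<r * r. w \<notin> ?B \<longrightarrow> Kr_box_Kr r (a * r + 1) w \<longrightarrow> w = a * r"
      proof (intro allI impI)
        fix w assume wn: "w < r * r" and wB: "w \<notin> ?B" and E: "Kr_box_Kr r (a * r + 1) w"
        have E': "(w div r = a \<and> w mod r \<noteq> 1) \<or> (w mod r = 1 \<and> w div r \<noteq> a)"
          using Kr_Ed[OF E] u by metis
        show "w = a * r"
        proof (cases "w div r = a")
          case True
          have "w mod r = 0" using True wn wB a by (auto simp: mem_S0)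
          thus ?thesis using True v by (intro dm_eq[of w r "a * r"]) auto
        next
          case False
          hence "w mod r = 1" using E' by auto
          hence "w div r = 0" using wn wB by (auto simp: mem_S0)
          hence "w = 1" using one \<open>w mod r = 1\<close> by (intro dm_eq[of w r 1]) auto
          thus ?thesis using wB r2 by auto
        qed
      qed
    qed
    moreover have "insert (a * r) ?B = insert r (S0 r) \<union> {1..<r} \<union> {x. \<exists>i. 2 \<le> i \<and> i < Suc a \<and> x = i * r}"
      using a by (auto simp: less_Suc_eq)
    ultimately show ?thesis by simp
  qed
qed

lemma S0_zfs:
  assumes r2: "r \<ge> 2"
  shows "psd_zero_forcing_set (r * r) (Kr_box_Kr r) (S0 r)"
proof -
  have r0: "r > 0" using r2 by simp
  have "insert r (S0 r) \<union> {1..<r} \<union> {x. \<exists>i. 2 \<le> i \<and> i < r \<and> x = i * r} = {0..<r * r}"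
  proof (rule Set.set_eqI)
    fix x
    show "x \<in> insert r (S0 r) \<union> {1..<r} \<union> {x. \<exists>i. 2 \<le> i \<and> i < r \<and> x = i * r} \<longleftrightarrow> x \<in> {0..<r * r}"
    proof
      assume "x \<in> insert r (S0 r) \<union> {1..<r} \<union> {x. \<exists>i. 2 \<le> i \<and> i < r \<and> x = i * r}"
      thus "x \<in> {0..<r * r}"
      proof (elim UnE insertE)
        assume "x = r" thus ?thesis using r2 lt_rr[of 1 r 0] by simp
      next
        assume "x \<in> S0 r" thus ?thesis by (simp add: mem_S0)
      next
        assume "x \<in> {1..<r}" thus ?thesis using r2 lt_rr[of 0 r x] by simp
      next
        assume "x \<in> {x. \<exists>i. 2 \<le> i \<and> i < r \<and> x = i * r}"
        then obtain i where "i < r" "x = i * r" by auto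
        thus ?thesis using lt_rr[of i r 0] r2 by simp
      qed
    next
      assume x: "x \<in> {0..<r * r}"
      have xd: "x = (x div r) * r + x mod r" by simp
      have dlt: "x div r < r" using x by (simp add: less_mult_imp_div_less)
      show "x \<in> insert r (S0 r) \<union> {1..<r} \<union> {x. \<exists>i. 2 \<le> i \<and> i < r \<and> x = i * r}"
      proof (cases "x \<in> S0 r")
        case True thus ?thesis by simp
      next
        case False
        hence c: "x \<noteq> 0" "x div r = 0 \<or> x mod r = 0" using x by (auto simp: mem_S0)
        show ?thesis
        proof (cases "x div r = 0")
          case True
          hence "x < r" using r0 by (simp add: div_eq_0_iff)
          thus ?thesis using c by simp
        next
          case False
          hence m: "x mod r = 0" using c by simp
          show ?thesis
          proof (cases "x div r = 1")
            case True thus ?thesis using m xd by simp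
          next
            case False
            hence "2 \<le> x div r" using \<open>x div r \<noteq> 0\<close> by simp
            hence "x \<in> {x. \<exists>i. 2 \<le> i \<and> i < r \<and> x = i * r}" using dlt m xd by auto
            thus ?thesis by simp
          qed
        qed
      qed
    qed
  qed
  moreover have "psd_reach (r * r) (Kr_box_Kr r) (S0 r)
     (insert r (S0 r) \<union> {1..<r} \<union> {x. \<exists>i. 2 \<le> i \<and> i < r \<and> x = i * r})"
    using phase3[OF r2, of r] r2 by simp
  moreover have "S0 r \<subseteq> {0..<r * r}" unfolding S0_def by auto
  ultimately show ?thesis unfolding psd_zero_forcing_set_def by simp
qed

lemma cs_sum:
  fixes g :: "nat \<Rightarrow> real"
  assumes "finite A"
  shows "(\<Sum>i\<in>A. g i)^2 \<le> real (card A) * (\<Sum>i\<in>A. (g i)^2)"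
proof -
  have e1: "(\<Sum>i\<in>A. \<Sum>j\<in>A. (g i - g j)^2) =
     (\<Sum>i\<in>A. \<Sum>j\<in>A. (g i)^2) + (\<Sum>i\<in>A. \<Sum>j\<in>A. (g j)^2) - 2 * (\<Sum>i\<in>A. \<Sum>j\<in>A. g i * g j)"
    by (simp add: power2_diff sum.distrib sum_subtractf sum_distrib_left mult.assoc)
  have e2: "(\<Sum>i\<in>A. \<Sum>j\<in>A. (g i)^2) = real (card A) * (\<Sum>i\<in>A. (g i)^2)"
    by (simp add: sum_distrib_left mult.commute)
  have e3: "(\<Sum>i\<in>A. \<Sum>j\<in>A. (g j)^2) = real (card A) * (\<Sum>i\<in>A. (g i)^2)"
    by simp
  have e4: "(\<Sum>i\<in>A. \<Sum>j\<in>A. g i * g j) = (\<Sum>i\<in>A. g i)^2"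
    by (simp add: power2_eq_square sum_product)
  have "0 \<le> (\<Sum>i\<in>A. \<Sum>j\<in>A. (g i - g j)^2)" by (intro sum_nonneg) auto
  thus ?thesis unfolding e1 e2 e3 e4 by simp
qed

definition dd :: "nat \<Rightarrow> nat \<Rightarrow> real" where
  "dd r b = (if b = 0 then -1 else 2 * (real r - 1))"

definition Bm :: "nat \<Rightarrow> real mat" where
  "Bm r = mat (r * r) (r * r) (\<lambda>(x, y). (if x div r = y div r then 2 * real r else 0) +
      (if x mod r = y mod r then dd r (x mod r) else 0))"

lemma Bm_entry: "x < r * r \<Longrightarrow> y < r * r \<Longrightarrow> Bm r $$ (x, y) =
   (if x div r = y div r then 2 * real r else 0) + (if x mod r = y mod r then dd r (x mod r) else 0)"
  unfolding Bm_def by simp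

lemma Bm_carrier: "Bm r \<in> carrier_mat (r * r) (r * r)"
  unfolding Bm_def by simp

lemma pair_sum:
  fixes r :: nat
  assumes r0: "r > 0"
  shows "(\<Sum>x<r * r. g x) = (\<Sum>a<r. \<Sum>b<r. g (a * r + b))"
proof -
  let ?h = "\<lambda>(a, b). a * r + b"
  have inj: "inj_on ?h ({..<r} \<times> {..<r})"
  proof (rule inj_onI, clarsimp)
    fix a b a' b' :: nat assume h: "a < r" "b < r" "a' < r" "b' < r" "a * r + b = a' * r + b'"
    have "a = (a * r + b) div r" "b = (a * r + b) mod r" using dm_simps[OF h(2)] by simp_all
    moreover have "a' = (a' * r + b') div r" "b' = (a' * r + b') mod r" using dm_simps[OF h(4)] by simp_all
    ultimately show "a = a' \<and> b = b'" using h(5) by simp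
  qed
  have img: "?h ` ({..<r} \<times> {..<r}) = {..<r * r}"
  proof (rule Set.set_eqI)
    fix x
    show "x \<in> ?h ` ({..<r} \<times> {..<r}) \<longleftrightarrow> x \<in> {..<r * r}"
    proof
      assume "x \<in> ?h ` ({..<r} \<times> {..<r})"
      then obtain a b where ab: "a < r" "b < r" "x = a * r + b" by auto
      thus "x \<in> {..<r * r}" using lt_rr[OF ab(1,2)] by simp
    next
      assume "x \<in> {..<r * r}"
      hence "x div r < r" by (simp add: less_mult_imp_div_less)
      moreover have "x mod r < r" using r0 by simp
      moreover have "x = ?h (x div r, x mod r)" by simp
      ultimately show "x \<in> ?h ` ({..<r} \<times> {..<r})" by blast
    qed
  qed
  have "(\<Sum>x<r * r. g x) = (\<Sum>p\<in>{..<r} \<times> {..<r}. g (?h p))"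
    using sum.reindex[OF inj, of g] img by simp
  also have "\<dots> = (\<Sum>(a, b)\<in>{..<r} \<times> {..<r}. g (a * r + b))"
    by (intro sum.cong) auto
  also have "\<dots> = (\<Sum>a<r. \<Sum>b<r. g (a * r + b))"
    by (rule sum.cartesian_product[symmetric])
  finally show ?thesis .
qed

lemma B_row:
  assumes r0: "r > 0" and x: "x < r * r"
  shows "(\<Sum>y<r * r. Bm r $$ (x, y) * f y) =
    2 * real r * (\<Sum>b<r. f (x div r * r + b)) + dd r (x mod r) * (\<Sum>a<r. f (a * r + x mod r))"
proof -
  have xd: "x div r < r" using x by (simp add: less_mult_imp_div_less)
  have xm: "x mod r < r" using r0 by simp
  have "(\<Sum>y<r * r. Bm r $$ (x, y) * f y) = (\<Sum>a<r. \<Sum>b<r. Bm r $$ (x, a * r + b) * f (a * r + b))"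
    by (rule pair_sum[OF r0])
  also have "\<dots> = (\<Sum>a<r. \<Sum>b<r. (if x div r = a then 2 * real r * f (a * r + b) else 0) +
      (if x mod r = b then dd r (x mod r) * f (a * r + b) else 0))"
  proof (intro sum.cong refl)
    fix a b assume "a \<in> {..<r}" "b \<in> {..<r}"
    hence ab: "a < r" "b < r" by auto
    have "a * r + b < r * r" using lt_rr[OF ab] .
    thus "Bm r $$ (x, a * r + b) * f (a * r + b) = (if x div r = a then 2 * real r * f (a * r + b) else 0) +
      (if x mod r = b then dd r (x mod r) * f (a * r + b) else 0)"
      using x dm_simps[OF ab(2)] by (simp add: Bm_entry algebra_simps)
  qed
  also have "\<dots> = (\<Sum>a<r. (if x div r = a then 2 * real r * (\<Sum>b<r. f (a * r + b)) else 0) +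
      dd r (x mod r) * f (a * r + x mod r))"
  proof (rule sum.cong[OF refl])
    fix a assume "a \<in> {..<r}"
    have 1: "(\<Sum>b<r. (if x div r = a then 2 * real r * f (a * r + b) else 0)) =
       (if x div r = a then 2 * real r * (\<Sum>b<r. f (a * r + b)) else 0)"
      by (cases "x div r = a") (simp_all add: sum_distrib_left)
    have 2: "(\<Sum>b<r. (if x mod r = b then dd r (x mod r) * f (a * r + b) else 0)) =
       dd r (x mod r) * f (a * r + x mod r)"
      using xm by (simp add: sum.delta')
    show "(\<Sum>b<r. (if x div r = a then 2 * real r * f (a * r + b) else 0) +
      (if x mod r = b then dd r (x mod r) * f (a * r + b) else 0)) =
      (if x div r = a then 2 * real r * (\<Sum>b<r. f (a * r + b)) else 0) + dd r (x mod r) * f (a * r + x mod r)"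
      unfolding sum.distrib 1 2 ..
  qed
  also have "\<dots> = (\<Sum>a<r. (if x div r = a then 2 * real r * (\<Sum>b<r. f (a * r + b)) else 0)) +
      (\<Sum>a<r. dd r (x mod r) * f (a * r + x mod r))"
    by (rule sum.distrib)
  also have "(\<Sum>a<r. (if x div r = a then 2 * real r * (\<Sum>b<r. f (a * r + b)) else 0)) =
     2 * real r * (\<Sum>b<r. f (x div r * r + b))"
    using xd by (simp add: sum.delta')
  also have "(\<Sum>a<r. dd r (x mod r) * f (a * r + x mod r)) = dd r (x mod r) * (\<Sum>a<r. f (a * r + x mod r))"
    by (simp add: sum_distrib_left)
  finally show ?thesis .
qed

lemma B_qf:
  assumes r0: "r > 0"
  shows "qf (r * r) (\<lambda>i j. Bm r $$ (i, j)) f f =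
    2 * real r * (\<Sum>a<r. (\<Sum>b<r. f (a * r + b))^2) + (\<Sum>b<r. dd r b * (\<Sum>a<r. f (a * r + b))^2)"
proof -
  define R where "R a = (\<Sum>b<r. f (a * r + b))" for a
  define C where "C b = (\<Sum>a<r. f (a * r + b))" for b
  have "qf (r * r) (\<lambda>i j. Bm r $$ (i, j)) f f =
      (\<Sum>x<r * r. f x * (2 * real r * R (x div r) + dd r (x mod r) * C (x mod r)))"
    unfolding qf_def
  proof (rule sum.cong[OF refl])
    fix x assume "x \<in> {..<r * r}"
    hence x: "x < r * r" by simp
    show "f x * (\<Sum>j<r * r. Bm r $$ (x, j) * f j) = f x * (2 * real r * R (x div r) + dd r (x mod r) * C (x mod r))"
      unfolding B_row[OF r0 x] R_def C_def ..
  qed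
  also have "\<dots> = (\<Sum>a<r. \<Sum>b<r. f (a * r + b) * (2 * real r * R a + dd r b * C b))"
    unfolding pair_sum[OF r0]
  proof (intro sum.cong refl)
    fix a b assume "a \<in> {..<r}" "b \<in> {..<r}"
    hence b: "b < r" by simp
    show "f (a * r + b) * (2 * real r * R ((a * r + b) div r) + dd r ((a * r + b) mod r) * C ((a * r + b) mod r)) =
      f (a * r + b) * (2 * real r * R a + dd r b * C b)" unfolding dm_simps[OF b] ..
  qed
  also have "\<dots> = (\<Sum>a<r. \<Sum>b<r. 2 * real r * R a * f (a * r + b)) + (\<Sum>a<r. \<Sum>b<r. dd r b * C b * f (a * r + b))"
    by (simp add: sum.distrib algebra_simps)
  also have "(\<Sum>a<r. \<Sum>b<r. 2 * real r * R a * f (a * r + b)) = (\<Sum>a<r. 2 * real r * (R a)^2)"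
  proof (rule sum.cong[OF refl])
    fix a
    have "(\<Sum>b<r. 2 * real r * R a * f (a * r + b)) = 2 * real r * R a * (\<Sum>b<r. f (a * r + b))"
      by (rule sum_distrib_left[symmetric])
    also have "(\<Sum>b<r. f (a * r + b)) = R a" by (simp add: R_def)
    finally show "(\<Sum>b<r. 2 * real r * R a * f (a * r + b)) = 2 * real r * (R a)^2"
      by (simp add: power2_eq_square)
  qed
  also have "(\<Sum>a<r. 2 * real r * (R a)^2) = 2 * real r * (\<Sum>a<r. (R a)^2)"
    by (rule sum_distrib_left[symmetric])
  also have "(\<Sum>a<r. \<Sum>b<r. dd r b * C b * f (a * r + b)) = (\<Sum>b<r. \<Sum>a<r. dd r b * C b * f (a * r + b))"
    by (rule sum.swap)
  also have "\<dots> = (\<Sum>b<r. dd r b * (C b)^2)"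
  proof (rule sum.cong[OF refl])
    fix b
    have "(\<Sum>a<r. dd r b * C b * f (a * r + b)) = dd r b * C b * (\<Sum>a<r. f (a * r + b))"
      by (rule sum_distrib_left[symmetric])
    also have "(\<Sum>a<r. f (a * r + b)) = C b" by (simp add: C_def)
    finally show "(\<Sum>a<r. dd r b * C b * f (a * r + b)) = dd r b * (C b)^2"
      by (simp add: power2_eq_square)
  qed
  finally show ?thesis unfolding R_def C_def .
qed

lemma psd_ineq:
  fixes R C :: "nat \<Rightarrow> real"
  assumes r2: "r \<ge> 2" and T: "(\<Sum>a<r. R a) = (\<Sum>b<r. C b)"
  shows "0 \<le> 2 * real r * (\<Sum>a<r. (R a)^2) + (\<Sum>b<r. dd r b * (C b)^2)"
proof -
  have split: "{..<r} = insert 0 {1..<r}" using r2 by auto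
  define Y where "Y = (\<Sum>b\<in>{1..<r}. C b)"
  define Q where "Q = (\<Sum>b\<in>{1..<r}. (C b)^2)"
  have sC: "(\<Sum>b<r. C b) = C 0 + Y" unfolding split Y_def by simp
  have sD: "(\<Sum>b<r. dd r b * (C b)^2) = 2 * (real r - 1) * Q - (C 0)^2"
  proof -
    have "(\<Sum>b\<in>{1..<r}. dd r b * (C b)^2) = (\<Sum>b\<in>{1..<r}. 2 * (real r - 1) * (C b)^2)"
      by (intro sum.cong refl) (auto simp: dd_def)
    thus ?thesis unfolding split Q_def by (simp add: sum_distrib_left dd_def)
  qed
  have cs1: "(\<Sum>a<r. R a)^2 \<le> real r * (\<Sum>a<r. (R a)^2)" using cs_sum[of "{..<r}" R] by simp
  have cs2: "Y^2 \<le> (real r - 1) * Q" using cs_sum[of "{1..<r}" C] r2 unfolding Y_def Q_def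
    by (simp add: of_nat_diff)
  have sq: "0 \<le> 2 * (C 0 + Y)^2 - (C 0)^2 + 2 * Y^2"
  proof -
    have "2 * (C 0 + Y)^2 - (C 0)^2 + 2 * Y^2 = (C 0 + 2 * Y)^2" by (simp add: power2_eq_square algebra_simps)
    thus ?thesis by simp
  qed
  show ?thesis using cs1 cs2 sq sD T sC by (simp add: algebra_simps)
qed

lemma dd_nz: "r \<ge> 2 \<Longrightarrow> dd r b \<noteq> 0"
  unfolding dd_def by auto

lemma B_graph:
  assumes r2: "r \<ge> 2"
  shows "Bm r \<in> graph_psd_mats (r * r) (Kr_box_Kr r)"
proof -
  have r0: "r > 0" using r2 by simp
  let ?n = "r * r"
  have car: "Bm r \<in> carrier_mat ?n ?n" by (rule Bm_carrier)
  have tr: "(Bm r)\<^sup>T = Bm r"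
  proof (rule eq_matI)
    fix i j assume "i < dim_row (Bm r)" "j < dim_col (Bm r)"
    hence ij: "i < ?n" "j < ?n" using car by auto
    show "(Bm r)\<^sup>T $$ (i, j) = Bm r $$ (i, j)"
      using ij car by (auto simp: Bm_entry)
  qed (use car in auto)
  have ps: "\<forall>x\<in>carrier_vec (dim_row (Bm r)). 0 \<le> x \<bullet> (Bm r *\<^sub>v x)"
  proof
    fix x :: "real vec" assume "x \<in> carrier_vec (dim_row (Bm r))"
    hence xc: "x \<in> carrier_vec ?n" using car by simp
    hence xe: "x = vec ?n (\<lambda>i. x $ i)" by auto
    define f where "f i = x $ i" for i
    have "x \<bullet> (Bm r *\<^sub>v x) = qf ?n (\<lambda>i j. Bm r $$ (i, j)) f f"
      using quad_form[OF car, of f] xe unfolding f_def by simp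
    also have "\<dots> = 2 * real r * (\<Sum>a<r. (\<Sum>b<r. f (a * r + b))^2) + (\<Sum>b<r. dd r b * (\<Sum>a<r. f (a * r + b))^2)"
      by (rule B_qf[OF r0])
    also have "\<dots> \<ge> 0"
      by (rule psd_ineq[OF r2]) (rule sum.swap)
    finally show "0 \<le> x \<bullet> (Bm r *\<^sub>v x)" .
  qed
  have pat: "\<forall>i<?n. \<forall>j<?n. i \<noteq> j \<longrightarrow> (Bm r $$ (i, j) \<noteq> 0 \<longleftrightarrow> Kr_box_Kr r i j)"
  proof (intro allI impI)
    fix i j assume i: "i < ?n" and j: "j < ?n" and ij: "i \<noteq> j"
    show "Bm r $$ (i, j) \<noteq> 0 \<longleftrightarrow> Kr_box_Kr r i j"
    proof (cases "i div r = j div r")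
      case True
      hence "i mod r \<noteq> j mod r" using ij dm_eq by blast
      thus ?thesis using True i j r0 by (simp add: Bm_entry Kr_box_Kr_def)
    next
      case False
      show ?thesis
      proof (cases "i mod r = j mod r")
        case True
        thus ?thesis using False i j dd_nz[OF r2] by (simp add: Bm_entry Kr_box_Kr_def)
      next
        case False2: False
        thus ?thesis using False i j by (simp add: Bm_entry Kr_box_Kr_def)
      qed
    qed
  qed
  show ?thesis unfolding graph_psd_mats_def psd_mat_def using car tr ps pat by auto
qed

definition dl :: "nat \<Rightarrow> nat \<Rightarrow> real" where "dl p q = (if p = q then 1 else 0)"

definition Gv :: "nat \<Rightarrow> nat \<times> nat \<Rightarrow> real vec" where
  "Gv r p = vec (r * r) (\<lambda>x. (dl (x div r) (fst p) - dl (x div r) 0) * (dl (x mod r) (snd p) - dl (x mod r) 0))"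

definition Hv :: "nat \<Rightarrow> real vec" where
  "Hv r = vec (r * r) (\<lambda>x. if x mod r = 0 then 2 * (real r - 1) else -1)"

lemma vec_row:
  assumes r0: "r > 0" and x: "x < r * r"
  shows "(Bm r *\<^sub>v vec (r * r) (\<lambda>y. F (y div r) (y mod r))) $ x =
    2 * real r * (\<Sum>b<r. F (x div r) b) + dd r (x mod r) * (\<Sum>a<r. F a (x mod r))"
proof -
  let ?v = "vec (r * r) (\<lambda>y. F (y div r) (y mod r))"
  have xd: "x div r < r" using x by (simp add: less_mult_imp_div_less)
  have xm: "x mod r < r" using r0 by simp
  have "(Bm r *\<^sub>v ?v) $ x = (\<Sum>j<r * r. Bm r $$ (x, j) * ?v $ j)"
    by (rule mat_vec_entry[OF Bm_carrier _ x]) simp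
  also have "\<dots> = 2 * real r * (\<Sum>b<r. ?v $ (x div r * r + b)) + dd r (x mod r) * (\<Sum>a<r. ?v $ (a * r + x mod r))"
    by (rule B_row[OF r0 x])
  also have "(\<Sum>b<r. ?v $ (x div r * r + b)) = (\<Sum>b<r. F (x div r) b)"
  proof (rule sum.cong[OF refl])
    fix b assume "b \<in> {..<r}"
    hence b: "b < r" by simp
    show "?v $ (x div r * r + b) = F (x div r) b"
      using lt_rr[OF xd b] dm_simps[OF b] by simp
  qed
  also have "(\<Sum>a<r. ?v $ (a * r + x mod r)) = (\<Sum>a<r. F a (x mod r))"
  proof (rule sum.cong[OF refl])
    fix a assume "a \<in> {..<r}"
    hence a: "a < r" by simp
    show "?v $ (a * r + x mod r) = F a (x mod r)"
      using lt_rr[OF a xm] dm_simps[OF xm] by simp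
  qed
  finally show ?thesis .
qed

lemma in_kernel:
  assumes r0: "r > 0"
    and h: "\<And>a m. a < r \<Longrightarrow> m < r \<Longrightarrow> 2 * real r * (\<Sum>b<r. F a b) + dd r m * (\<Sum>a<r. F a m) = 0"
  shows "vec (r * r) (\<lambda>y. F (y div r) (y mod r)) \<in> mat_kernel (Bm r)"
proof (rule mat_kernelI[OF Bm_carrier])
  show "vec (r * r) (\<lambda>y. F (y div r) (y mod r)) \<in> carrier_vec (r * r)" by simp
  show "Bm r *\<^sub>v vec (r * r) (\<lambda>y. F (y div r) (y mod r)) = 0\<^sub>v (r * r)"
  proof (rule eq_vecI)
    fix x assume "x < dim_vec (0\<^sub>v (r * r) :: real vec)"
    hence x: "x < r * r" by simp
    have "x div r < r" using x by (simp add: less_mult_imp_div_less)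
    moreover have "x mod r < r" using r0 by simp
    ultimately show "(Bm r *\<^sub>v vec (r * r) (\<lambda>y. F (y div r) (y mod r))) $ x = 0\<^sub>v (r * r) $ x"
      using vec_row[OF r0 x] h x by simp
  qed (use Bm_carrier in auto)
qed

lemma sum_dl: "q < r \<Longrightarrow> (\<Sum>b<r. dl b q) = 1"
  unfolding dl_def by simp

lemma G_ker:
  assumes r0: "r > 0" and p: "fst p < r" "snd p < r"
  shows "Gv r p \<in> mat_kernel (Bm r)"
  unfolding Gv_def
proof (rule in_kernel[OF r0])
  fix a m assume a: "a < r" and m: "m < r"
  have 1: "(\<Sum>b<r. (dl a (fst p) - dl a 0) * (dl b (snd p) - dl b 0)) = 0"
  proof -
    have "(\<Sum>b<r. (dl a (fst p) - dl a 0) * (dl b (snd p) - dl b 0)) =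
        (dl a (fst p) - dl a 0) * ((\<Sum>b<r. dl b (snd p)) - (\<Sum>b<r. dl b 0))"
      by (simp only: sum_subtractf[symmetric] sum_distrib_left)
    also have "\<dots> = 0" using p r0 by (simp add: sum_dl)
    finally show ?thesis .
  qed
  have 2: "(\<Sum>a<r. (dl a (fst p) - dl a 0) * (dl m (snd p) - dl m 0)) = 0"
  proof -
    have "(\<Sum>a<r. (dl a (fst p) - dl a 0) * (dl m (snd p) - dl m 0)) =
        ((\<Sum>a<r. dl a (fst p)) - (\<Sum>a<r. dl a 0)) * (dl m (snd p) - dl m 0)"
      by (simp only: sum_subtractf[symmetric] sum_distrib_right)
    also have "\<dots> = 0" using p r0 by (simp add: sum_dl)
    finally show ?thesis .
  qed
  show "2 * real r * (\<Sum>b<r. (dl a (fst p) - dl a 0) * (dl b (snd p) - dl b 0)) +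
        dd r m * (\<Sum>a<r. (dl a (fst p) - dl a 0) * (dl m (snd p) - dl m 0)) = 0"
    unfolding 1 2 by simp
qed

lemma H_ker:
  assumes r2: "r \<ge> 2"
  shows "Hv r \<in> mat_kernel (Bm r)"
proof -
  have r0: "r > 0" using r2 by simp
  define F where "F a b = (if b = 0 then 2 * (real r - 1) else -1)" for a b :: nat
  have "Hv r = vec (r * r) (\<lambda>y. F (y div r) (y mod r))" unfolding Hv_def F_def by simp
  also have "\<dots> \<in> mat_kernel (Bm r)"
  proof (rule in_kernel[OF r0])
    fix a m assume a: "a < r" and m: "m < r"
    have split: "{..<r} = insert 0 {1..<r}" using r2 by auto
    have s1: "(\<Sum>b<r. F a b) = real r - 1"
    proof -
      have "(\<Sum>b<r. F a b) = 2 * (real r - 1) + (\<Sum>b\<in>{1..<r}. F a b)" unfolding split by (simp add: F_def)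
      also have "(\<Sum>b\<in>{1..<r}. F a b) = (\<Sum>b\<in>{1..<r}. -1)" by (intro sum.cong refl) (auto simp: F_def)
      also have "\<dots> = - (real r - 1)" using r2 by (simp add: of_nat_diff)
      finally show ?thesis by simp
    qed
    have s2: "(\<Sum>a<r. F a m) = real r * F 0 m" by (simp add: F_def)
    show "2 * real r * (\<Sum>b<r. F a b) + dd r m * (\<Sum>a<r. F a m) = 0"
      unfolding s1 s2 by (cases "m = 0") (simp_all add: F_def dd_def algebra_simps)
  qed
  finally show ?thesis .
qed

lemma kernel_lower:
  assumes r2: "r \<ge> 2"
  shows "(r - 1)^2 + 1 \<le> kernel_dim (Bm r)"
proof -
  have r0: "r > 0" using r2 by simp
  let ?n = "r * r"
  define P where "P = {1..<r} \<times> {1..<r}"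
  define K where "K = insert (Hv r) (Gv r ` P)"
  interpret Kn: kernel ?n ?n "Bm r" by unfold_locales (rule Bm_carrier)
  have Gij: "Gv r p $ (i * r + j) = (if p = (i, j) then 1 else 0)"
    if "p \<in> P" "i \<in> {1..<r}" "j \<in> {1..<r}" for p i j
  proof -
    have ij: "i < r" "j < r" "i \<noteq> 0" "j \<noteq> 0" using that by auto
    have "i * r + j < ?n" using lt_rr[OF ij(1,2)] .
    thus ?thesis using dm_simps[OF ij(2), of i] ij by (cases p) (auto simp: Gv_def dl_def)
  qed
  have Hij: "Hv r $ (i * r + j) = -1" if "i \<in> {1..<r}" "j \<in> {1..<r}" for i j
  proof -
    have ij: "i < r" "j < r" "j \<noteq> 0" using that by auto
    have "i * r + j < ?n" using lt_rr[OF ij(1,2)] .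
    thus ?thesis using dm_simps[OF ij(2), of i] ij by (simp add: Hv_def)
  qed
  have n0: "0 < ?n" using r0 by simp
  have G0: "Gv r p $ 0 = 1" if "p \<in> P" for p
    using that n0 by (cases p) (auto simp: Gv_def dl_def P_def)
  have H0: "Hv r $ 0 = 2 * (real r - 1)" using n0 by (simp add: Hv_def)
  have inj: "inj_on (Gv r) P"
  proof (rule inj_onI)
    fix p q assume p: "p \<in> P" and q: "q \<in> P" and eq: "Gv r p = Gv r q"
    obtain i j where qij: "q = (i, j)" "i \<in> {1..<r}" "j \<in> {1..<r}" using q unfolding P_def by auto
    have "Gv r p $ (i * r + j) = Gv r q $ (i * r + j)" using eq by simp
    thus "p = q" using Gij[OF p qij(2,3)] Gij[OF q qij(2,3)] qij(1) by (auto split: if_splits)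
  qed
  have one: "(1::nat) \<in> {1..<r}" using r2 by simp
  have Hn: "Hv r \<notin> Gv r ` P"
  proof
    assume "Hv r \<in> Gv r ` P"
    then obtain p where p: "p \<in> P" "Hv r = Gv r p" by auto
    have "Hv r $ (1 * r + 1) = Gv r p $ (1 * r + 1)" using p by simp
    thus False using Hij[OF one one] Gij[OF p(1) one one] by (auto split: if_splits)
  qed
  have finP: "finite P" unfolding P_def by simp
  have cardK: "card K = (r - 1)^2 + 1"
  proof -
    have "card K = Suc (card (Gv r ` P))" unfolding K_def using Hn finP by simp
    also have "card (Gv r ` P) = card P" by (rule card_image[OF inj])
    also have "card P = (r - 1) * (r - 1)" unfolding P_def by (simp add: card_cartesian_product)
    finally show ?thesis by (simp add: power2_eq_square)
  qed
  have KK: "K \<subseteq> mat_kernel (Bm r)"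
    unfolding K_def using H_ker[OF r2] G_ker[OF r0] by (auto simp: P_def)
  have Kcar: "K \<subseteq> carrier_vec ?n" unfolding K_def by (auto simp: Hv_def Gv_def)
  have finK: "finite K" unfolding K_def using finP by simp
  have li: "Kn.NC.lin_indpt K"
  proof (rule Kn.NC.finite_lin_indpt2[OF finK Kcar])
    fix a assume "True" and lc: "Kn.NC.lincomb a K = 0\<^sub>v ?n"
    have ev: "a (Hv r) * Hv r $ x + (\<Sum>p\<in>P. a (Gv r p) * Gv r p $ x) = 0" if x: "x < ?n" for x
    proof -
      have "0 = Kn.NC.lincomb a K $ x" using lc x by simp
      also have "\<dots> = (\<Sum>w\<in>K. a w * w $ x)" by (rule Kn.NC.lincomb_index[OF x Kcar])
      also have "\<dots> = a (Hv r) * Hv r $ x + (\<Sum>w\<in>Gv r ` P. a w * w $ x)"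
        unfolding K_def using Hn finP by simp
      also have "(\<Sum>w\<in>Gv r ` P. a w * w $ x) = (\<Sum>p\<in>P. a (Gv r p) * Gv r p $ x)"
        using sum.reindex[OF inj, of "\<lambda>w. a w * w $ x"] by simp
      finally show ?thesis by simp
    qed
    have eqH: "a (Gv r p) = a (Hv r)" if p: "p \<in> P" for p
    proof -
      obtain i j where pij: "p = (i, j)" "i \<in> {1..<r}" "j \<in> {1..<r}" using p unfolding P_def by auto
      have x: "i * r + j < ?n" using lt_rr[of i r j] pij by simp
      have "(\<Sum>q\<in>P. a (Gv r q) * Gv r q $ (i * r + j)) = (\<Sum>q\<in>P. if q = p then a (Gv r p) else 0)"
        by (intro sum.cong refl) (use Gij pij in auto)
      also have "\<dots> = a (Gv r p)" using p finP by simp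
      finally show ?thesis using ev[OF x] Hij[OF pij(2,3)] by simp
    qed
    have "(\<Sum>p\<in>P. a (Gv r p) * Gv r p $ 0) = (\<Sum>p\<in>P. a (Hv r))"
      by (intro sum.cong refl) (simp add: eqH G0)
    also have "\<dots> = real ((r - 1) * (r - 1)) * a (Hv r)"
      unfolding P_def by (simp add: card_cartesian_product)
    finally have "a (Hv r) * (2 * (real r - 1)) + real ((r - 1) * (r - 1)) * a (Hv r) = 0"
      using ev[OF n0] H0 by simp
    hence "a (Hv r) * (2 * (real r - 1) + real ((r - 1) * (r - 1))) = 0"
      by (simp add: algebra_simps)
    moreover have "2 * (real r - 1) + real ((r - 1) * (r - 1)) > 0"
    proof -
      have "real r \<ge> 2" using r2 by simp
      hence "\<forall>c::real. c \<ge> 0 \<longrightarrow> 2 * (real r - 1) + c > 0" by auto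
      moreover have "real ((r - 1) * (r - 1)) \<ge> 0" by simp
      ultimately show ?thesis by blast
    qed
    ultimately have aH: "a (Hv r) = 0" by (metis mult_eq_0_iff order_less_irrefl)
    show "\<forall>v\<in>K. a v = 0" unfolding K_def using aH eqH by auto
  qed
  have Kli: "Kn.lin_indpt K" using Kn.lindep_same[OF KK] li by simp
  obtain \<beta> where fb: "finite \<beta>" and bb: "Kn.basis \<beta>" using kernel_basis_exists[OF Bm_carrier] by blast
  have fd: "Kn.Ker.fin_dim" unfolding Kn.Ker.fin_dim_def using fb bb unfolding Kn.Ker.basis_def by blast
  have "card K \<le> Kn.dim" by (rule Kn.Ker.li_le_dim(2)[OF fd KK Kli])
  thus ?thesis using cardK by simp
qed

theorem lemma3p4:
  fixes r :: nat
  assumes "r \<ge> 2"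
  shows "Zplus (r * r) (Kr_box_Kr r) = (r - 1)^2 + 1 \<and>
         Mplus (r * r) (Kr_box_Kr r) = (r - 1)^2 + 1"
proof -
  have r2: "r \<ge> 2" using assms .
  have Esym: "\<forall>i j. Kr_box_Kr r i j \<longrightarrow> Kr_box_Kr r j i" using Kr_sym by blast
  have Z0: "psd_zero_forcing_set (r * r) (Kr_box_Kr r) (S0 r)" by (rule S0_zfs[OF r2])
  have c0: "card (S0 r) = (r - 1)^2 + 1" by (rule card_S0[OF r2])
  have B: "Bm r \<in> graph_psd_mats (r * r) (Kr_box_Kr r)" by (rule B_graph[OF r2])
  have kB: "(r - 1)^2 + 1 \<le> kernel_dim (Bm r)" by (rule kernel_lower[OF r2])
  have upper: "kernel_dim A \<le> (r - 1)^2 + 1" if "A \<in> graph_psd_mats (r * r) (Kr_box_Kr r)" for A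
    using mplus_le_zplus[OF that Z0 Esym] c0 by simp
  have lower: "(r - 1)^2 + 1 \<le> card S" if "psd_zero_forcing_set (r * r) (Kr_box_Kr r) S" for S
    using mplus_le_zplus[OF B that Esym] kB by simp
  have Z: "Zplus (r * r) (Kr_box_Kr r) = (r - 1)^2 + 1"
    unfolding Zplus_def
  proof (rule Least_equality)
    show "\<exists>S. psd_zero_forcing_set (r * r) (Kr_box_Kr r) S \<and> card S = (r - 1)^2 + 1"
      using Z0 c0 by blast
    fix k assume "\<exists>S. psd_zero_forcing_set (r * r) (Kr_box_Kr r) S \<and> card S = k"
    thus "(r - 1)^2 + 1 \<le> k" using lower by blast
  qed
  have kB': "kernel_dim (Bm r) = (r - 1)^2 + 1" using kB upper[OF B] by simp
  have M: "Mplus (r * r) (Kr_box_Kr r) = (r - 1)^2 + 1"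
    unfolding Mplus_def
  proof (rule Greatest_equality)
    show "\<exists>A\<in>graph_psd_mats (r * r) (Kr_box_Kr r). kernel_dim A = (r - 1)^2 + 1"
      using B kB' by blast
    fix k assume "\<exists>A\<in>graph_psd_mats (r * r) (Kr_box_Kr r). kernel_dim A = k"
    thus "k \<le> (r - 1)^2 + 1" using upper by blast
  qed
  show ?thesis using Z M by simp
qed

end
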